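(* Let $\mathbf{X}\in\{0,1\}^{m\times n}$ and let $Q\subsetneq\mathrm{supp}(\mathbf{X})$ be nonempty. If the generalised binary matrix $\mathbf{X}^Q$ is minimally non-firm and $\mathbf{X}^P$ is firm for every $P\subsetneq Q$, then $\mathcal{S}^Q(\mathbf{X})\in\{0,1\}^{(m+|Q|)\times(n+|Q|)}$ is minimally non-firm.
   Context: A generalised binary matrix is a matrix with entries in $\{0,1,?\}$; a standard binary matrix has entries in $\{0,1\}$. For such $\mathbf{Y}$, $\mathrm{supp}(\mathbf{Y})=\{(i,j):y_{i,j}=1\}$. A submatrix indexed by $I\times J$ is obtained by deleting rows not in $I$ and columns not in $J$; it is proper if it omits at least one row or column. A rectangle of $\mathbf{Y}$ is a set $I\times J$ of positions containing no entry equal to $0$. An isolated set is a subset of $\mathrm{supp}(\mathbf{Y})$ no two distinct elements of which lie in a common rectangle; $i(\mathbf{Y})$ is the maximum size of an isolated set; $br(\mathbf{Y})$ is the minimum number of rectangles whose union contains $\mathrm{supp}(\mathbf{Y})$ ($?$ entries need not be covered). $\mathbf{Y}$ is firm if $i(\mathbf{Y}')=br(\mathbf{Y}')$ for every submatrix $\mathbf{Y}'$ including $\mathbf{Y}$; $\mathbf{Y}$ is minimally non-firm if $i(\mathbf{Y})<br(\mathbf{Y})$ and $i(\mathbf{Y}')=br(\mathbf{Y}')$ for every proper submatrix $\mathbf{Y}'$. For $\mathbf{X}\in\{0,1\}^{m\times n}$ and $P\subseteq\mathrm{supp}(\mathbf{X})$, $\mathbf{X}^P$ is the generalised binary matrix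 obtained from $\mathbf{X}$ by replacing every entry in $P$ by $?$ (so $\mathbf{X}^\emptyset=\mathbf{X}$). Stretching: for nonempty $Q=\{(\ell_1,k_1),\dots,(\ell_q,k_q)\}\subseteq\mathrm{supp}(\mathbf{X})$ listed in lexicographic order (row index, then column index), $\mathcal{S}^Q(\mathbf{X})$ is the $(m+q)\times(n+q)$ binary matrix whose top-left $m\times n$ block is $\mathbf{X}$, whose entries at $(\ell_t,n+t)$, $(m+t,k_t)$, $(m+t,n+t)$ equal $1$ for each $t\in[q]$, and all of whose other entries are $0$. *)

theory Defs
  imports Main "HOL-Library.Product_Lexorder"
begin

text \<open>Entries of a generalised binary matrix. Matrices are functions
  nat => nat => entry together with dimensions m, n; rows are indexed by
  {0..<m} and columns by {0..<n} (0-based).\<close>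

datatype entry = Zero | One | Unk

text \<open>A submatrix is given by row index set I and column index set J.\<close>

definition gsupp :: "(nat \<Rightarrow> nat \<Rightarrow> entry) \<Rightarrow> nat set \<Rightarrow> nat set \<Rightarrow> (nat \<times> nat) set" where
  "gsupp Y I J = {(i, j). i \<in> I \<and> j \<in> J \<and> Y i j = One}"

definition is_rect :: "(nat \<Rightarrow> nat \<Rightarrow> entry) \<Rightarrow> nat set \<Rightarrow> nat set \<Rightarrow> nat set \<Rightarrow> nat set \<Rightarrow> bool" where
  "is_rect Y I J A B \<longleftrightarrow> A \<subseteq> I \<and> B \<subseteq> J \<and> (\<forall>i\<in>A. \<forall>j\<in>B. Y i j \<noteq> Zero)"

definition isolated :: "(nat \<Rightarrow> nat \<Rightarrow> entry) \<Rightarrow> nat set \<Rightarrow> nat set \<Rightarrow> (nat \<times> nat) set \<Rightarrow> bool" where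
  "isolated Y I J S \<longleftrightarrow> S \<subseteq> gsupp Y I J \<and>
     (\<forall>x\<in>S. \<forall>y\<in>S. x \<noteq> y \<longrightarrow> \<not> (\<exists>A B. is_rect Y I J A B \<and> x \<in> A \<times> B \<and> y \<in> A \<times> B))"

definition isol_num :: "(nat \<Rightarrow> nat \<Rightarrow> entry) \<Rightarrow> nat set \<Rightarrow> nat set \<Rightarrow> nat" where
  "isol_num Y I J = Max {card S | S. isolated Y I J S}"

definition br_num :: "(nat \<Rightarrow> nat \<Rightarrow> entry) \<Rightarrow> nat set \<Rightarrow> nat set \<Rightarrow> nat" where
  "br_num Y I J = (LEAST k. \<exists>F. finite F \<and> card F = k \<and>
      (\<forall>(A, B)\<in>F. is_rect Y I J A B) \<and> gsupp Y I J \<subseteq> (\<Union>(A, B)\<in>F. A \<times> B))"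

definition firm :: "(nat \<Rightarrow> nat \<Rightarrow> entry) \<Rightarrow> nat \<Rightarrow> nat \<Rightarrow> bool" where
  "firm Y m n \<longleftrightarrow> (\<forall>I J. I \<subseteq> {..<m} \<longrightarrow> J \<subseteq> {..<n} \<longrightarrow> isol_num Y I J = br_num Y I J)"

definition min_non_firm :: "(nat \<Rightarrow> nat \<Rightarrow> entry) \<Rightarrow> nat \<Rightarrow> nat \<Rightarrow> bool" where
  "min_non_firm Y m n \<longleftrightarrow> isol_num Y {..<m} {..<n} < br_num Y {..<m} {..<n} \<and>
     (\<forall>I J. I \<subseteq> {..<m} \<longrightarrow> J \<subseteq> {..<n} \<longrightarrow> (I \<noteq> {..<m} \<or> J \<noteq> {..<n}) \<longrightarrow>
        isol_num Y I J = br_num Y I J)"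

text \<open>Standard binary matrices are nat => nat => bool (True = 1).\<close>

definition bsupp :: "(nat \<Rightarrow> nat \<Rightarrow> bool) \<Rightarrow> nat \<Rightarrow> nat \<Rightarrow> (nat \<times> nat) set" where
  "bsupp X m n = {(i, j). i < m \<and> j < n \<and> X i j}"

text \<open>X^P: entries in P replaced by ?.\<close>

definition qmat :: "(nat \<Rightarrow> nat \<Rightarrow> bool) \<Rightarrow> (nat \<times> nat) set \<Rightarrow> nat \<Rightarrow> nat \<Rightarrow> entry" where
  "qmat X P i j = (if (i, j) \<in> P then Unk else if X i j then One else Zero)"

text \<open>Stretching S^Q(X), (m+q) x (n+q); the t-th (0-based) element of Q in
  lexicographic order is (fst (qs!t), snd (qs!t)).\<close>

definition stretch :: "(nat \<Rightarrow> nat \<Rightarrow> bool) \<Rightarrow> nat \<Rightarrow> nat \<Rightarrow> (nat \<times> nat) set \<Rightarrow> nat \<Rightarrow> nat \<Rightarrow> bool" where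
  "stretch X m n Q i j =
     (if i < m \<and> j < n then X i j
      else (let qs = sorted_list_of_set Q in
        \<exists>t < length qs. (i = fst (qs ! t) \<and> j = n + t) \<or> (i = m + t \<and> j = snd (qs ! t))
                         \<or> (i = m + t \<and> j = n + t)))"

end

theory Submission
  imports Defs
begin


lemma isolated_iff:
  "isolated Y I J S \<longleftrightarrow> S \<subseteq> gsupp Y I J \<and>
     (\<forall>x\<in>S. \<forall>y\<in>S. x \<noteq> y \<longrightarrow> \<not> (Y (fst x) (snd y) \<noteq> Zero \<and> Y (fst y) (snd x) \<noteq> Zero))"
proof
  assume H: "isolated Y I J S"
  show "S \<subseteq> gsupp Y I J \<and>
     (\<forall>x\<in>S. \<forall>y\<in>S. x \<noteq> y \<longrightarrow> \<not> (Y (fst x) (snd y) \<noteq> Zero \<and> Y (fst y) (snd x) \<noteq> Zero))"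
  proof (intro conjI ballI impI notI)
    show "S \<subseteq> gsupp Y I J" using H unfolding isolated_def by blast
  next
    fix x y assume xy: "x \<in> S" "y \<in> S" "x \<noteq> y"
      and c: "Y (fst x) (snd y) \<noteq> Zero \<and> Y (fst y) (snd x) \<noteq> Zero"
    obtain a b where x: "x = (a,b)" by (cases x)
    obtain c d where y: "y = (c,d)" by (cases y)
    have xs: "a \<in> I" "b \<in> J" "Y a b = One" "c \<in> I" "d \<in> J" "Y c d = One"
      using H xy unfolding isolated_def gsupp_def x y by auto
    have "is_rect Y I J {a, c} {b, d}"
      using xs c unfolding is_rect_def x y by auto
    moreover have "x \<in> {a, c} \<times> {b, d}" "y \<in> {a, c} \<times> {b, d}"
      unfolding x y by auto
    ultimately show False using H xy unfolding isolated_def by blast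
  qed
next
  assume H: "S \<subseteq> gsupp Y I J \<and>
     (\<forall>x\<in>S. \<forall>y\<in>S. x \<noteq> y \<longrightarrow> \<not> (Y (fst x) (snd y) \<noteq> Zero \<and> Y (fst y) (snd x) \<noteq> Zero))"
  show "isolated Y I J S" unfolding isolated_def
  proof (intro conjI ballI impI notI)
    show "S \<subseteq> gsupp Y I J" using H by blast
  next
    fix x y assume xy: "x \<in> S" "y \<in> S" "x \<noteq> y"
      and "\<exists>A B. is_rect Y I J A B \<and> x \<in> A \<times> B \<and> y \<in> A \<times> B"
    then obtain A B where R: "is_rect Y I J A B" "x \<in> A \<times> B" "y \<in> A \<times> B" by blast
    obtain a b where x: "x = (a,b)" by (cases x)
    obtain c d where y: "y = (c,d)" by (cases y)
    have "Y (fst x) (snd y) \<noteq> Zero \<and> Y (fst y) (snd x) \<noteq> Zero"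
      using R unfolding is_rect_def x y by auto
    thus False using H xy by blast
  qed
qed


lemma gsupp_finite: "finite I \<Longrightarrow> finite J \<Longrightarrow> finite (gsupp Y I J)"
  by (rule finite_subset[of _ "I \<times> J"]) (auto simp: gsupp_def)

lemma isol_fin: "finite I \<Longrightarrow> finite J \<Longrightarrow> finite {card S | S. isolated Y I J S}"
proof -
  assume "finite I" "finite J"
  hence "finite (card ` Pow (gsupp Y I J))" using gsupp_finite by blast
  moreover have "{card S | S. isolated Y I J S} \<subseteq> card ` Pow (gsupp Y I J)"
    unfolding isolated_def by auto
  ultimately show ?thesis by (rule finite_subset[rotated])
qed

lemma isol_ge: "finite I \<Longrightarrow> finite J \<Longrightarrow> isolated Y I J S \<Longrightarrow> card S \<le> isol_num Y I J"
  unfolding isol_num_def by (rule Max_ge[OF isol_fin]) auto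

lemma isol_ex: "finite I \<Longrightarrow> finite J \<Longrightarrow> \<exists>S. isolated Y I J S \<and> card S = isol_num Y I J"
proof -
  assume f: "finite I" "finite J"
  have "isolated Y I J {}" unfolding isolated_def by auto
  hence "{card S | S. isolated Y I J S} \<noteq> {}" by blast
  from Max_in[OF isol_fin[OF f] this] show ?thesis unfolding isol_num_def by auto
qed



lemma br_le: "finite F \<Longrightarrow> (\<forall>(A, B)\<in>F. is_rect Y I J A B) \<Longrightarrow> gsupp Y I J \<subseteq> (\<Union>(A, B)\<in>F. A \<times> B)
   \<Longrightarrow> br_num Y I J \<le> card F"
  unfolding br_num_def by (rule Least_le) blast

lemma br_ex: "finite I \<Longrightarrow> finite J \<Longrightarrow> \<exists>F. finite F \<and> card F = br_num Y I J \<and>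
      (\<forall>(A, B)\<in>F. is_rect Y I J A B) \<and> gsupp Y I J \<subseteq> (\<Union>(A, B)\<in>F. A \<times> B)"
proof -
  assume f: "finite I" "finite J"
  let ?F = "(\<lambda>(i,j). ({i},{j})) ` gsupp Y I J"
  have "finite ?F" using gsupp_finite[OF f] by blast
  moreover have "\<forall>(A, B)\<in>?F. is_rect Y I J A B" unfolding is_rect_def gsupp_def by auto
  moreover have "gsupp Y I J \<subseteq> (\<Union>(A, B)\<in>?F. A \<times> B)" by force
  ultimately have "\<exists>k F. finite F \<and> card F = k \<and>
      (\<forall>(A, B)\<in>F. is_rect Y I J A B) \<and> gsupp Y I J \<subseteq> (\<Union>(A, B)\<in>F. A \<times> B)" by blast
  thus ?thesis unfolding br_num_def by (rule LeastI_ex)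
qed



lemma isol_le_br: "finite I \<Longrightarrow> finite J \<Longrightarrow> isol_num Y I J \<le> br_num Y I J"
proof -
  assume f: "finite I" "finite J"
  obtain S where S: "isolated Y I J S" "card S = isol_num Y I J" using isol_ex[OF f] by blast
  obtain F where F: "finite F" "card F = br_num Y I J" "\<forall>(A, B)\<in>F. is_rect Y I J A B"
    "gsupp Y I J \<subseteq> (\<Union>(A, B)\<in>F. A \<times> B)" using br_ex[OF f, of Y] by (elim exE conjE) (rule that; assumption)
  define g where "g x = (SOME p. p \<in> F \<and> x \<in> fst p \<times> snd p)" for x
  have g: "g x \<in> F \<and> x \<in> fst (g x) \<times> snd (g x)" if "x \<in> S" for x
  proof -
    have "x \<in> gsupp Y I J" using S(1) that unfolding isolated_def by blast
    hence "x \<in> (\<Union>(A, B)\<in>F. A \<times> B)" using F(4) by blast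
    then obtain p where p: "p \<in> F" "x \<in> (case p of (A, B) \<Rightarrow> A \<times> B)" by (rule UN_E)
    have "x \<in> fst p \<times> snd p" using p(2) by (simp add: case_prod_beta)
    hence "\<exists>p. p \<in> F \<and> x \<in> fst p \<times> snd p" using p(1) by blast
    thus ?thesis unfolding g_def by (rule someI_ex)
  qed
  have "inj_on g S"
  proof (rule inj_onI, rule ccontr)
    fix x y assume xy: "x \<in> S" "y \<in> S" "g x = g y" "x \<noteq> y"
    have gx: "g x \<in> F" using g[OF xy(1)] by blast
    have "is_rect Y I J (fst (g x)) (snd (g x))" using bspec[OF F(3) gx] by (simp add: case_prod_beta)
    moreover have "x \<in> fst (g x) \<times> snd (g x)" using g[OF xy(1)] by blast
    moreover have "y \<in> fst (g x) \<times> snd (g x)" using g[OF xy(2)] xy(3) by simp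
    ultimately have "\<exists>A B. is_rect Y I J A B \<and> x \<in> A \<times> B \<and> y \<in> A \<times> B" by blast
    moreover have "\<forall>x\<in>S. \<forall>y\<in>S. x \<noteq> y \<longrightarrow> \<not> (\<exists>A B. is_rect Y I J A B \<and> x \<in> A \<times> B \<and> y \<in> A \<times> B)"
      using S(1) unfolding isolated_def by (rule conjunct2)
    ultimately show False using xy(1,2,4) by blast
  qed
  moreover have "g ` S \<subseteq> F" using g by blast
  ultimately have "card S \<le> card F" using F(1) by (rule card_inj_on_le)
  thus ?thesis using S F by simp
qed



lemma qmat_empty_nz[simp]: "(qmat Z {} i j \<noteq> Zero) = Z i j"
  and qmat_empty_one[simp]: "(qmat Z {} i j = One) = Z i j"
  and qmat_empty_zero[simp]: "(qmat Z {} i j = Zero) = (\<not> Z i j)"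
  by (auto simp: qmat_def)

lemma qP_nz: "P \<subseteq> bsupp X m n \<Longrightarrow> (qmat X P i j \<noteq> Zero) = X i j"
  by (auto simp: qmat_def bsupp_def)

lemma qP_one: "(qmat X P i j = One) = (X i j \<and> (i,j) \<notin> P)"
  by (auto simp: qmat_def)

locale stc =
  fixes X :: "nat \<Rightarrow> nat \<Rightarrow> bool" and m n :: nat and Q :: "(nat \<times> nat) set"
  assumes Qsub: "Q \<subseteq> bsupp X m n"
begin

definition qs where "qs = sorted_list_of_set Q"
definition lt where "lt t = fst (qs ! t)"
definition kt where "kt t = snd (qs ! t)"

lemma finQ: "finite Q"
  by (rule finite_subset[OF Qsub, of ]) (rule finite_subset[of _ "{..<m} \<times> {..<n}"], auto simp: bsupp_def)

lemma len_qs: "length qs = card Q" unfolding qs_def by simp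
lemma dist_qs: "distinct qs" unfolding qs_def by simp
lemma set_qs: "set qs = Q" unfolding qs_def using finQ by simp

lemma qs_in: "t < card Q \<Longrightarrow> qs ! t \<in> Q"
  using set_qs len_qs by (metis nth_mem)

lemma qs_eq: "qs ! t = (lt t, kt t)" unfolding lt_def kt_def by simp

lemma lk_props: "t < card Q \<Longrightarrow> lt t < m \<and> kt t < n \<and> X (lt t) (kt t)"
  using qs_in[of t] Qsub qs_eq[of t] by (auto simp: bsupp_def)

lemma Q_nth: "p \<in> Q \<Longrightarrow> \<exists>t < card Q. p = qs ! t"
  using set_qs len_qs by (metis in_set_conv_nth)

lemma qs_inj: "t < card Q \<Longrightarrow> s < card Q \<Longrightarrow> qs ! t = qs ! s \<Longrightarrow> t = s"
  using dist_qs len_qs by (simp add: nth_eq_iff_index_eq)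

abbreviation y where "y \<equiv> stretch X m n Q"

lemma y_old: "i < m \<Longrightarrow> j < n \<Longrightarrow> y i j = X i j"
  unfolding stretch_def by simp

lemma y_new: "\<not> (i < m \<and> j < n) \<Longrightarrow> y i j = (\<exists>t < card Q. (i = lt t \<and> j = n + t) \<or> (i = m + t \<and> j = kt t)
                         \<or> (i = m + t \<and> j = n + t))"
  unfolding stretch_def Let_def lt_def kt_def qs_def[symmetric] len_qs by auto

lemma y_ln: "i < m \<Longrightarrow> t < card Q \<Longrightarrow> y i (n + t) = (i = lt t)"
  by (subst y_new) auto

lemma y_mk: "t < card Q \<Longrightarrow> j < n \<Longrightarrow> y (m + t) j = (j = kt t)"
  using lk_props by (subst y_new) auto

lemma y_mn: "t < card Q \<Longrightarrow> s < card Q \<Longrightarrow> y (m + t) (n + s) = (s = t)"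
proof (subst y_new)
  assume "t < card Q" "s < card Q"
  show "\<not> (m + t < m \<and> n + s < n)" by simp
  show "(\<exists>u < card Q. (m + t = lt u \<and> n + s = n + u) \<or> (m + t = m + u \<and> n + s = kt u)
                         \<or> (m + t = m + u \<and> n + s = n + u)) = (s = t)"
    using lk_props \<open>t < card Q\<close> by (auto; fastforce)
qed

end



context stc begin

abbreviation Ym where "Ym \<equiv> qmat y {}"

lemma G_all: "t < card Q \<Longrightarrow> a \<in> {lt t, m + t} \<Longrightarrow> b \<in> {kt t, n + t} \<Longrightarrow> y a b"
  using lk_props[of t] y_old y_ln y_mk y_mn by auto

lemma i_full_upper:
  "isol_num Ym {..<m + card Q} {..<n + card Q} \<le> isol_num (qmat X Q) {..<m} {..<n} + card Q"
proof -
  let ?I = "{..<m + card Q}" and ?J = "{..<n + card Q}"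
  obtain S where S: "isolated Ym ?I ?J S" "card S = isol_num Ym ?I ?J" using isol_ex[of ?I ?J Ym] by auto
  have Ssub: "S \<subseteq> gsupp Ym ?I ?J" and Siso: "\<forall>x\<in>S. \<forall>z\<in>S. x \<noteq> z \<longrightarrow> \<not> (Ym (fst x) (snd z) \<noteq> Zero \<and> Ym (fst z) (snd x) \<noteq> Zero)"
    using S(1) unfolding isolated_iff by auto
  have finS: "finite S" using Ssub gsupp_finite[of ?I ?J Ym] finite_subset by blast
  define S0 where "S0 = {p\<in>S. fst p < m \<and> snd p < n \<and> p \<notin> Q}"
  have "isolated (qmat X Q) {..<m} {..<n} S0"
    unfolding isolated_iff
  proof (intro conjI ballI impI)
    show "S0 \<subseteq> gsupp (qmat X Q) {..<m} {..<n}"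
    proof
      fix p assume p: "p \<in> S0"
      obtain i j where pij: "p = (i,j)" by (cases p)
      have "p \<in> gsupp Ym ?I ?J" using p Ssub S0_def by auto
      hence "y i j" using pij by (simp add: gsupp_def)
      thus "p \<in> gsupp (qmat X Q) {..<m} {..<n}" using p pij y_old unfolding S0_def gsupp_def qmat_def by auto
    qed
  next
    fix x z assume xz: "x \<in> S0" "z \<in> S0" "x \<noteq> z"
    show "\<not> (qmat X Q (fst x) (snd z) \<noteq> Zero \<and> qmat X Q (fst z) (snd x) \<noteq> Zero)"
    proof
      assume c: "qmat X Q (fst x) (snd z) \<noteq> Zero \<and> qmat X Q (fst z) (snd x) \<noteq> Zero"
      have b: "fst x < m" "snd x < n" "fst z < m" "snd z < n" "x \<in> S" "z \<in> S" using xz S0_def by auto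
      have "X (fst x) (snd z)" "X (fst z) (snd x)" using c qP_nz[OF Qsub] by auto
      hence "Ym (fst x) (snd z) \<noteq> Zero \<and> Ym (fst z) (snd x) \<noteq> Zero" using b y_old by simp
      thus False using Siso b xz(3) by blast
    qed
  qed
  hence c0: "card S0 \<le> isol_num (qmat X Q) {..<m} {..<n}" by (rule isol_ge[rotated 2]) auto
  define G where "G t = {(lt t, kt t), (lt t, n + t), (m + t, kt t), (m + t, n + t)}" for t
  have sub: "S - S0 \<subseteq> (\<Union>t\<in>{..<card Q}. S \<inter> G t)"
  proof
    fix p assume p: "p \<in> S - S0"
    obtain i j where pij: "p = (i,j)" by (cases p)
    have "p \<in> gsupp Ym ?I ?J" using p Ssub by auto
    hence yij: "y i j" using pij by (simp add: gsupp_def)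
    show "p \<in> (\<Union>t\<in>{..<card Q}. S \<inter> G t)"
    proof (cases "p \<in> Q")
      case True
      then obtain t where "t < card Q" "p = qs ! t" using Q_nth by blast
      thus ?thesis using p qs_eq[of t] G_def by auto
    next
      case False
      hence "\<not> (i < m \<and> j < n)" using p pij S0_def by auto
      then obtain t where "t < card Q" "(i = lt t \<and> j = n + t) \<or> (i = m + t \<and> j = kt t)
                         \<or> (i = m + t \<and> j = n + t)" using y_new yij by blast
      thus ?thesis using p pij G_def by auto
    qed
  qed
  have one: "card (S \<inter> G t) \<le> 1" if t: "t < card Q" for t
  proof -
    have "finite (S \<inter> G t)" using finS by simp
    moreover have "\<forall>a\<in>S \<inter> G t. \<forall>b\<in>S \<inter> G t. a = b"
    proof (intro ballI, rule ccontr)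
      fix a b assume ab: "a \<in> S \<inter> G t" "b \<in> S \<inter> G t" "a \<noteq> b"
      have "fst a \<in> {lt t, m + t}" "snd a \<in> {kt t, n + t}" "fst b \<in> {lt t, m + t}" "snd b \<in> {kt t, n + t}"
        using ab G_def by auto
      hence "Ym (fst a) (snd b) \<noteq> Zero \<and> Ym (fst b) (snd a) \<noteq> Zero" using G_all[OF t] by simp
      thus False using Siso ab by blast
    qed
    ultimately show ?thesis using card_le_Suc0_iff_eq by auto
  qed
  have "card (S - S0) \<le> card (\<Union>t\<in>{..<card Q}. S \<inter> G t)"
    using sub finS by (intro card_mono) auto
  also have "\<dots> \<le> (\<Sum>t\<in>{..<card Q}. card (S \<inter> G t))" by (rule card_UN_le) simp
  also have "\<dots> \<le> (\<Sum>t\<in>{..<card Q}. 1)" using one by (intro sum_mono) auto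
  finally have c1: "card (S - S0) \<le> card Q" by simp
  have s0: "S0 \<subseteq> S" by (auto simp: S0_def)
  have "card (S - S0) = card S - card S0" using finS s0 by (meson card_Diff_subset finite_subset)
  moreover have "card S0 \<le> card S" using finS s0 by (rule card_mono)
  ultimately show ?thesis using c0 c1 S(2) by linarith
qed

end



lemma br_obtain:
  assumes "finite I" "finite J"
  obtains F where "finite F" "card F = br_num Y I J" "\<forall>(A, B)\<in>F. is_rect Y I J A B"
    "gsupp Y I J \<subseteq> (\<Union>(A, B)\<in>F. A \<times> B)"
  using br_ex[OF assms, of Y] by (elim exE conjE) (rule that; assumption)

context stc begin

lemma br_full_lower:
  "br_num (qmat X Q) {..<m} {..<n} + card Q \<le> br_num Ym {..<m + card Q} {..<n + card Q}"
proof -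
  let ?I = "{..<m + card Q}" and ?J = "{..<n + card Q}"
  obtain F where F: "finite F" "card F = br_num Ym ?I ?J" "\<forall>(A, B)\<in>F. is_rect Ym ?I ?J A B"
    "gsupp Ym ?I ?J \<subseteq> (\<Union>(A, B)\<in>F. A \<times> B)"
    by (rule br_obtain[OF finite_lessThan finite_lessThan])
  have cov: "\<exists>p\<in>F. x \<in> fst p \<times> snd p" if "x \<in> gsupp Ym ?I ?J" for x
  proof -
    have "x \<in> (\<Union>(A, B)\<in>F. A \<times> B)" using F(4) that by blast
    then obtain p where p: "p \<in> F" "x \<in> (case p of (A, B) \<Rightarrow> A \<times> B)" by (rule UN_E)
    thus ?thesis by (auto simp: case_prod_beta)
  qed
  have rectF: "\<And>i j. p \<in> F \<Longrightarrow> i \<in> fst p \<Longrightarrow> j \<in> snd p \<Longrightarrow> y i j"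
    and subF: "p \<in> F \<Longrightarrow> fst p \<subseteq> ?I \<and> snd p \<subseteq> ?J" for p
    using F(3) unfolding is_rect_def by (auto simp: case_prod_beta)
  define f where "f t = (SOME p. p \<in> F \<and> (m + t, n + t) \<in> fst p \<times> snd p)" for t
  have f: "f t \<in> F \<and> (m + t, n + t) \<in> fst (f t) \<times> snd (f t)" if t: "t < card Q" for t
  proof -
    have "(m + t, n + t) \<in> gsupp Ym ?I ?J" using y_mn[OF t t] t by (simp add: gsupp_def)
    from cov[OF this] show ?thesis unfolding f_def by (rule someI_ex[OF bexE]) blast
  qed
  have injf: "inj_on f {..<card Q}"
  proof (rule inj_onI)
    fix t s assume ts: "t \<in> {..<card Q}" "s \<in> {..<card Q}" "f t = f s"
    have "y (m + t) (n + s)" using rectF[of "f t" "m + t" "n + s"] f[of t] f[of s] ts by auto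
    thus "t = s" using y_mn ts by auto
  qed
  have fF: "f ` {..<card Q} \<subseteq> F" using f by auto
  define F0 where "F0 = F - f ` {..<card Q}"
  have cF0: "card F0 = card F - card Q"
    unfolding F0_def using card_Diff_subset[OF finite_subset[OF fF F(1)] fF] card_image[OF injf] by simp
  have cQ: "card Q \<le> card F" using card_mono[OF F(1) fF] card_image[OF injf] by simp
  define F1 where "F1 = (\<lambda>p. (fst p \<inter> {..<m}, snd p \<inter> {..<n})) ` F0"
  have "br_num (qmat X Q) {..<m} {..<n} \<le> card F1"
  proof (rule br_le)
    show "finite F1" unfolding F1_def F0_def using F(1) by simp
    show "\<forall>(A, B)\<in>F1. is_rect (qmat X Q) {..<m} {..<n} A B"
    proof (clarsimp simp: F1_def F0_def is_rect_def)
      fix A B i j assume H: "(A, B) \<in> F" "i \<in> A" "i < m" "j \<in> B" "j < n" "qmat X Q i j = Zero"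
      have "y i j" using rectF[of "(A,B)" i j] H by auto
      hence "X i j" using y_old H by simp
      thus False using H(6) qP_nz[OF Qsub, of i j] by simp
    qed
    show "gsupp (qmat X Q) {..<m} {..<n} \<subseteq> (\<Union>(A, B)\<in>F1. A \<times> B)"
    proof
      fix x assume x: "x \<in> gsupp (qmat X Q) {..<m} {..<n}"
      obtain i j where xij: "x = (i,j)" by (cases x)
      have ij: "i < m" "j < n" "X i j" "(i,j) \<notin> Q" using x xij by (auto simp: gsupp_def qP_one)
      have "x \<in> gsupp Ym ?I ?J" using ij xij y_old by (simp add: gsupp_def)
      then obtain p where p: "p \<in> F" "x \<in> fst p \<times> snd p" using cov by blast
      have "p \<notin> f ` {..<card Q}"
      proof
        assume "p \<in> f ` {..<card Q}"
        then obtain t where t: "t < card Q" "p = f t" by auto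
        have "y i (n + t)" using rectF[of p i "n + t"] p xij f[OF t(1)] t by auto
        hence "i = lt t" using y_ln ij t by simp
        moreover have "y (m + t) j" using rectF[of p "m + t" j] p xij f[OF t(1)] t by auto
        hence "j = kt t" using y_mk ij t by simp
        ultimately have "(i,j) \<in> Q" using qs_in[OF t(1)] qs_eq[of t] by simp
        thus False using ij by simp
      qed
      hence "p \<in> F0" using p F0_def by simp
      thus "x \<in> (\<Union>(A, B)\<in>F1. A \<times> B)" using p xij ij unfolding F1_def by force
    qed
  qed
  also have "card F1 \<le> card F0" unfolding F1_def by (rule card_image_le) (simp add: F0_def F(1))
  finally show ?thesis using cF0 cQ F(2) by linarith
qed

end



context stc begin

lemma proper_eq:
  assumes Ip: "Ip \<subseteq> {..<m + card Q}" and Jp: "Jp \<subseteq> {..<n + card Q}"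
    and prp: "Ip \<noteq> {..<m + card Q} \<or> Jp \<noteq> {..<n + card Q}"
    and mnf: "min_non_firm (qmat X Q) m n" and firmP: "\<forall>P. P \<subset> Q \<longrightarrow> firm (qmat X P) m n"
  shows "isol_num Ym Ip Jp = br_num Ym Ip Jp"
proof -
  have finIp: "finite Ip" using Ip finite_subset by blast
  have finJp: "finite Jp" using Jp finite_subset by blast
  define I where "I = Ip \<inter> {..<m}"
  define J where "J = Jp \<inter> {..<n}"
  define B where "B = {t. t < card Q \<and> m + t \<in> Ip \<and> n + t \<in> Jp}"
  define R where "R = {t. t < card Q \<and> m + t \<in> Ip \<and> n + t \<notin> Jp \<and> kt t \<in> J}"
  define C where "C = {t. t < card Q \<and> n + t \<in> Jp \<and> m + t \<notin> Ip \<and> lt t \<in> I}"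
  define Kd where "Kd = kt ` R"
  define Ld where "Ld = lt ` C"
  define P where "P = (\<lambda>t. qs ! t) ` B"
  define IW where "IW = I - Ld"
  define JW where "JW = J - Kd"
  define W where "W = qmat X P"
  have finB: "finite B" "finite R" "finite C" unfolding B_def R_def C_def by auto
  have finK: "finite Kd" "finite Ld" unfolding Kd_def Ld_def using finB by auto
  have PQ: "P \<subseteq> Q" unfolding P_def B_def using qs_in by auto
  have Psub: "P \<subseteq> bsupp X m n" using PQ Qsub by auto
  have IWsub: "IW \<subseteq> {..<m}" "JW \<subseteq> {..<n}" "IW \<subseteq> Ip" "JW \<subseteq> Jp"
    unfolding IW_def JW_def I_def J_def by auto
  have finW: "finite IW" "finite JW" using IWsub finite_subset by blast+
  have eqW: "isol_num W IW JW = br_num W IW JW"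
  proof (cases "P = Q")
    case False
    hence "firm W m n" using PQ firmP W_def by auto
    thus ?thesis using IWsub unfolding firm_def by blast
  next
    case True
    have Ball: "B = {..<card Q}"
    proof
      show "B \<subseteq> {..<card Q}" unfolding B_def by auto
      show "{..<card Q} \<subseteq> B"
      proof
        fix t assume t: "t \<in> {..<card Q}"
        hence "qs ! t \<in> P" using True qs_in by auto
        then obtain s where s: "s \<in> B" "qs ! t = qs ! s" unfolding P_def by auto
        hence "t = s" using qs_inj t unfolding B_def by auto
        thus "t \<in> B" using s by simp
      qed
    qed
    have "R = {}" "C = {}" unfolding R_def C_def using Ball B_def by auto
    hence IWJW: "IW = I" "JW = J" unfolding IW_def JW_def Kd_def Ld_def by auto
    have "I \<noteq> {..<m} \<or> J \<noteq> {..<n}"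
    proof (rule ccontr)
      assume "\<not> (I \<noteq> {..<m} \<or> J \<noteq> {..<n})"
      hence IJ: "I = {..<m}" "J = {..<n}" by auto
      have "Ip = {..<m + card Q}"
      proof
        show "Ip \<subseteq> {..<m + card Q}" by (rule Ip)
        show "{..<m + card Q} \<subseteq> Ip"
        proof
          fix x assume x: "x \<in> {..<m + card Q}"
          show "x \<in> Ip"
          proof (cases "x < m")
            case True thus ?thesis using IJ I_def by auto
          next
            case False
            hence "x - m \<in> B" using Ball x by auto
            thus ?thesis using False unfolding B_def by auto
          qed
        qed
      qed
      moreover have "Jp = {..<n + card Q}"
      proof
        show "Jp \<subseteq> {..<n + card Q}" by (rule Jp)
        show "{..<n + card Q} \<subseteq> Jp"
        proof
          fix x assume x: "x \<in> {..<n + card Q}"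
          show "x \<in> Jp"
          proof (cases "x < n")
            case True thus ?thesis using IJ J_def by auto
          next
            case False
            hence "x - n \<in> B" using Ball x by auto
            thus ?thesis using False unfolding B_def by auto
          qed
        qed
      qed
      ultimately show False using prp by simp
    qed
    moreover have "I \<subseteq> {..<m}" "J \<subseteq> {..<n}" unfolding I_def J_def by auto
    ultimately show ?thesis using mnf True IWJW unfolding min_non_firm_def W_def by blast
  qed
  have lower: "isol_num W IW JW + card B + card Kd + card Ld \<le> isol_num Ym Ip Jp"
  proof -
    obtain S where S: "isolated W IW JW S" "card S = isol_num W IW JW" using isol_ex[OF finW, of W] by blast
    have Ssub: "S \<subseteq> gsupp W IW JW" and Siso: "\<forall>x\<in>S. \<forall>z\<in>S. x \<noteq> z \<longrightarrow> \<not> (W (fst x) (snd z) \<noteq> Zero \<and> W (fst z) (snd x) \<noteq> Zero)"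
      using S(1) unfolding isolated_iff by auto
    have finS: "finite S" using Ssub gsupp_finite[OF finW, of W] finite_subset by blast
    have Spt: "fst x \<in> IW \<and> snd x \<in> JW \<and> X (fst x) (snd x) \<and> x \<notin> P" if H: "x \<in> S" for x
      using H Ssub unfolding gsupp_def W_def qP_one by (cases x) auto
    define tau where "tau kk = (SOME t. t \<in> R \<and> kt t = kk)" for kk
    have tau: "tau kk \<in> R \<and> kt (tau kk) = kk" if H: "kk \<in> Kd" for kk
    proof -
      have "\<exists>t. t \<in> R \<and> kt t = kk" using H Kd_def by auto
      thus ?thesis unfolding tau_def by (rule someI_ex)
    qed
    define sig where "sig ll = (SOME t. t \<in> C \<and> lt t = ll)" for ll
    have sig: "sig ll \<in> C \<and> lt (sig ll) = ll" if H: "ll \<in> Ld" for ll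
    proof -
      have "\<exists>t. t \<in> C \<and> lt t = ll" using H Ld_def by auto
      thus ?thesis unfolding sig_def by (rule someI_ex)
    qed
    define bB where "bB = (\<lambda>t. (m + t, n + t)) ` B"
    define rK where "rK = (\<lambda>kk. (m + tau kk, kk)) ` Kd"
    define cL where "cL = (\<lambda>ll. (ll, n + sig ll)) ` Ld"
    define S' where "S' = S \<union> bB \<union> rK \<union> cL"
    define conf where "conf a b \<longleftrightarrow> y (fst a) (snd b) \<and> y (fst b) (snd a)" for a b :: "nat \<times> nat"
    have conf_sym: "conf a b \<Longrightarrow> conf b a" for a b unfolding conf_def by simp
    have Rp: "t < card Q \<and> m + t \<in> Ip \<and> n + t \<notin> Jp \<and> kt t \<in> J" if H: "t \<in> R" for t using H R_def by auto
    have Cp: "t < card Q \<and> n + t \<in> Jp \<and> m + t \<notin> Ip \<and> lt t \<in> I" if H: "t \<in> C" for t using H C_def by auto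
    have Bp: "t < card Q \<and> m + t \<in> Ip \<and> n + t \<in> Jp" if H: "t \<in> B" for t using H B_def by auto
    have IWm: "i \<in> IW \<Longrightarrow> i < m \<and> i \<notin> Ld" "j \<in> JW \<Longrightarrow> j < n \<and> j \<notin> Kd" for i j
      unfolding IW_def JW_def I_def J_def by auto
    have c_SS: "\<not> conf a b" if H: "a \<in> S" "b \<in> S" "a \<noteq> b" for a b
    proof
      assume c: "conf a b"
      have "a \<in> S" "b \<in> S" by fact+
      from Spt[OF this(1)] Spt[OF this(2)] IWm
      have "fst a < m" "snd a < n" "fst b < m" "snd b < n" by auto
      hence "X (fst a) (snd b) \<and> X (fst b) (snd a)" using c y_old unfolding conf_def by simp
      hence "W (fst a) (snd b) \<noteq> Zero \<and> W (fst b) (snd a) \<noteq> Zero" unfolding W_def using qP_nz[OF Psub] by simp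
      thus False using Siso H by blast
    qed
    have c_SB: "\<not> conf a b" if H: "a \<in> S" "b \<in> bB" for a b
    proof
      assume c: "conf a b"
      obtain t where t: "t \<in> B" "b = (m + t, n + t)" using H bB_def by auto
      have a: "fst a < m" "snd a < n" "a \<notin> P" using Spt[OF H(1)] IWm by auto
      have yy: "y (fst a) (n + t)" "y (m + t) (snd a)" using c t unfolding conf_def by simp_all
      have "fst a = lt t" using yy(1) a y_ln[of "fst a" t] Bp[OF t(1)] by simp
      moreover have "snd a = kt t" using yy(2) a y_mk[of t "snd a"] Bp[OF t(1)] by simp
      ultimately have "a = qs ! t" using qs_eq[of t] by (cases a) auto
      thus False using a t P_def by auto
    qed
    have c_SR: "\<not> conf a b" if H: "a \<in> S" "b \<in> rK" for a b
    proof
      assume c: "conf a b"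
      obtain kk where k: "kk \<in> Kd" "b = (m + tau kk, kk)" using H rK_def by auto
      have a: "fst a < m" "snd a < n" "snd a \<notin> Kd" using Spt[OF H(1)] IWm by auto
      have "y (m + tau kk) (snd a)" using c k unfolding conf_def by simp
      hence "snd a = kk" using a y_mk[of "tau kk" "snd a"] tau[OF k(1)] Rp[of "tau kk"] by simp
      thus False using a k by simp
    qed
    have c_SC: "\<not> conf a b" if H: "a \<in> S" "b \<in> cL" for a b
    proof
      assume c: "conf a b"
      obtain ll where l: "ll \<in> Ld" "b = (ll, n + sig ll)" using H cL_def by auto
      have a: "fst a < m" "snd a < n" "fst a \<notin> Ld" using Spt[OF H(1)] IWm by auto
      have "y (fst a) (n + sig ll)" using c l unfolding conf_def by simp
      hence "fst a = ll" using a y_ln[of "fst a" "sig ll"] sig[OF l(1)] Cp[of "sig ll"] by simp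
      thus False using a l by simp
    qed
    have c_BB: "\<not> conf a b" if H: "a \<in> bB" "b \<in> bB" "a \<noteq> b" for a b
    proof
      assume c: "conf a b"
      obtain t where t: "t \<in> B" "a = (m + t, n + t)" using H bB_def by auto
      obtain s where s: "s \<in> B" "b = (m + s, n + s)" using H bB_def by auto
      have "y (m + t) (n + s)" using c t s unfolding conf_def by simp
      hence "s = t" using y_mn[of t s] Bp[OF t(1)] Bp[OF s(1)] by simp
      thus False using H t s by simp
    qed
    have c_BR: "\<not> conf a b" if H: "a \<in> bB" "b \<in> rK" for a b
    proof
      assume c: "conf a b"
      obtain t where t: "t \<in> B" "a = (m + t, n + t)" using H bB_def by auto
      obtain kk where k: "kk \<in> Kd" "b = (m + tau kk, kk)" using H rK_def by auto
      have "y (m + tau kk) (n + t)" using c t k unfolding conf_def by simp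
      hence "t = tau kk" using y_mn[of "tau kk" t] Bp[OF t(1)] Rp[of "tau kk"] tau[OF k(1)] by simp
      thus False using Bp[OF t(1)] Rp[of "tau kk"] tau[OF k(1)] by auto
    qed
    have c_BC: "\<not> conf a b" if H: "a \<in> bB" "b \<in> cL" for a b
    proof
      assume c: "conf a b"
      obtain t where t: "t \<in> B" "a = (m + t, n + t)" using H bB_def by auto
      obtain ll where l: "ll \<in> Ld" "b = (ll, n + sig ll)" using H cL_def by auto
      have "y (m + t) (n + sig ll)" using c t l unfolding conf_def by simp
      hence "sig ll = t" using y_mn[of t "sig ll"] Bp[OF t(1)] Cp[of "sig ll"] sig[OF l(1)] by simp
      thus False using Bp[OF t(1)] Cp[of "sig ll"] sig[OF l(1)] by auto
    qed
    have c_RR: "\<not> conf a b" if H: "a \<in> rK" "b \<in> rK" "a \<noteq> b" for a b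
    proof
      assume c: "conf a b"
      obtain k1 where k1: "k1 \<in> Kd" "a = (m + tau k1, k1)" using H rK_def by auto
      obtain k2 where k2: "k2 \<in> Kd" "b = (m + tau k2, k2)" using H rK_def by auto
      have "k2 < n" using k2(1) Kd_def R_def J_def by auto
      moreover have "y (m + tau k1) k2" using c k1 k2 unfolding conf_def by simp
      ultimately have "k2 = kt (tau k1)" using y_mk[of "tau k1" k2] Rp[of "tau k1"] tau[OF k1(1)] by simp
      hence "k1 = k2" using tau[OF k1(1)] by simp
      thus False using H k1 k2 by simp
    qed
    have c_CC: "\<not> conf a b" if H: "a \<in> cL" "b \<in> cL" "a \<noteq> b" for a b
    proof
      assume c: "conf a b"
      obtain l1 where l1: "l1 \<in> Ld" "a = (l1, n + sig l1)" using H cL_def by auto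
      obtain l2 where l2: "l2 \<in> Ld" "b = (l2, n + sig l2)" using H cL_def by auto
      have "l2 < m" using l2(1) Ld_def C_def I_def by auto
      moreover have "y l2 (n + sig l1)" using c l1 l2 unfolding conf_def by simp
      ultimately have "l2 = lt (sig l1)" using y_ln[of l2 "sig l1"] Cp[of "sig l1"] sig[OF l1(1)] by simp
      hence "l1 = l2" using sig[OF l1(1)] by simp
      thus False using H l1 l2 by simp
    qed
    have c_RC: "\<not> conf a b" if H: "a \<in> rK" "b \<in> cL" for a b
    proof
      assume c: "conf a b"
      obtain kk where k: "kk \<in> Kd" "a = (m + tau kk, kk)" using H rK_def by auto
      obtain ll where l: "ll \<in> Ld" "b = (ll, n + sig ll)" using H cL_def by auto
      have "y (m + tau kk) (n + sig ll)" using c k l unfolding conf_def by simp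
      hence "sig ll = tau kk" using y_mn[of "tau kk" "sig ll"] Rp[of "tau kk"] tau[OF k(1)] Cp[of "sig ll"] sig[OF l(1)]
        by simp
      thus False using Rp[of "tau kk"] tau[OF k(1)] Cp[of "sig ll"] sig[OF l(1)] by auto
    qed
    have noconf: "\<not> conf a b" if H: "a \<in> S'" "b \<in> S'" "a \<noteq> b" for a b
    proof -
      have "a \<in> S \<or> a \<in> bB \<or> a \<in> rK \<or> a \<in> cL" "b \<in> S \<or> b \<in> bB \<or> b \<in> rK \<or> b \<in> cL"
        using H S'_def by auto
      thus ?thesis
      proof (elim disjE)
        assume "a \<in> S" "b \<in> S" thus ?thesis using c_SS H(3) by blast
      next assume "a \<in> S" "b \<in> bB" thus ?thesis using c_SB by blast
      next assume "a \<in> S" "b \<in> rK" thus ?thesis using c_SR by blast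
      next assume "a \<in> S" "b \<in> cL" thus ?thesis using c_SC by blast
      next assume "a \<in> bB" "b \<in> S" thus ?thesis using c_SB conf_sym by blast
      next assume "a \<in> bB" "b \<in> bB" thus ?thesis using c_BB H(3) by blast
      next assume "a \<in> bB" "b \<in> rK" thus ?thesis using c_BR by blast
      next assume "a \<in> bB" "b \<in> cL" thus ?thesis using c_BC by blast
      next assume "a \<in> rK" "b \<in> S" thus ?thesis using c_SR conf_sym by blast
      next assume "a \<in> rK" "b \<in> bB" thus ?thesis using c_BR conf_sym by blast
      next assume "a \<in> rK" "b \<in> rK" thus ?thesis using c_RR H(3) by blast
      next assume "a \<in> rK" "b \<in> cL" thus ?thesis using c_RC by blast
      next assume "a \<in> cL" "b \<in> S" thus ?thesis using c_SC conf_sym by blast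
      next assume "a \<in> cL" "b \<in> bB" thus ?thesis using c_BC conf_sym by blast
      next assume "a \<in> cL" "b \<in> rK" thus ?thesis using c_RC conf_sym by blast
      next assume "a \<in> cL" "b \<in> cL" thus ?thesis using c_CC H(3) by blast
      qed
    qed
    have S'sub: "S' \<subseteq> gsupp Ym Ip Jp"
    proof
      fix x assume x: "x \<in> S'"
      have "x \<in> S \<or> x \<in> bB \<or> x \<in> rK \<or> x \<in> cL" using x S'_def by auto
      moreover have "x \<in> gsupp Ym Ip Jp" if H: "x \<in> S"
      proof -
        have "fst x \<in> Ip" "snd x \<in> Jp" "fst x < m" "snd x < n" "X (fst x) (snd x)"
          using Spt[OF H] IWsub IWm by auto
        thus ?thesis using y_old unfolding gsupp_def by (cases x) auto
      qed
      moreover have "x \<in> gsupp Ym Ip Jp" if H: "x \<in> bB"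
      proof -
        obtain t where t: "t \<in> B" "x = (m + t, n + t)" using H bB_def by auto
        thus ?thesis using Bp[OF t(1)] y_mn unfolding gsupp_def by auto
      qed
      moreover have "x \<in> gsupp Ym Ip Jp" if H: "x \<in> rK"
      proof -
        obtain kk where k: "kk \<in> Kd" "x = (m + tau kk, kk)" using H rK_def by auto
        have "kk \<in> J" using Rp[of "tau kk"] tau[OF k(1)] by auto
        thus ?thesis using k Rp[of "tau kk"] tau[OF k(1)] y_mk J_def unfolding gsupp_def by auto
      qed
      moreover have "x \<in> gsupp Ym Ip Jp" if H: "x \<in> cL"
      proof -
        obtain ll where l: "ll \<in> Ld" "x = (ll, n + sig ll)" using H cL_def by auto
        have "ll \<in> I" using Cp[of "sig ll"] sig[OF l(1)] by auto
        thus ?thesis using l Cp[of "sig ll"] sig[OF l(1)] y_ln I_def unfolding gsupp_def by auto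
      qed
      ultimately show "x \<in> gsupp Ym Ip Jp" by blast
    qed
    have isoS': "isolated Ym Ip Jp S'"
      unfolding isolated_iff using S'sub noconf unfolding conf_def by auto
    have cB: "card bB = card B" unfolding bB_def by (rule card_image) (auto intro: inj_onI)
    have cR: "card rK = card Kd" unfolding rK_def by (rule card_image) (auto intro: inj_onI)
    have cC: "card cL = card Ld" unfolding cL_def by (rule card_image) (auto intro: inj_onI)
    have finr: "finite bB" "finite rK" "finite cL" using finB finK bB_def rK_def cL_def by auto
    have Sm: "x \<in> S \<Longrightarrow> fst x < m \<and> snd x < n" for x using Spt IWm by blast
    have Km: "kk \<in> Kd \<Longrightarrow> kk < n" for kk using Kd_def R_def J_def by auto
    have Lm: "ll \<in> Ld \<Longrightarrow> ll < m" for ll using Ld_def C_def I_def by auto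
    have d1: "S \<inter> bB = {}" using Sm bB_def by fastforce
    have d2: "(S \<union> bB) \<inter> rK = {}" using Sm rK_def bB_def Km by fastforce
    have d3: "(S \<union> bB \<union> rK) \<inter> cL = {}" using Sm rK_def bB_def cL_def Lm by fastforce
    have "card S' = card S + card B + card Kd + card Ld"
      unfolding S'_def
      using card_Un_disjoint[OF finS finr(1) d1] card_Un_disjoint[OF _ finr(2) d2]
        card_Un_disjoint[OF _ finr(3) d3] finS finr cB cR cC by simp
    moreover have "card S' \<le> isol_num Ym Ip Jp" by (rule isol_ge[OF finIp finJp isoS'])
    ultimately show ?thesis using S(2) by simp
  qed
  have upper: "br_num Ym Ip Jp \<le> br_num W IW JW + card B + card Kd + card Ld"
  proof -
    obtain F where F: "finite F" "card F = br_num W IW JW" "\<forall>(A, B)\<in>F. is_rect W IW JW A B"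
      "gsupp W IW JW \<subseteq> (\<Union>(A, B)\<in>F. A \<times> B)"
      by (rule br_obtain[OF finW])
    define Gr where "Gr t = ({lt t, m + t} \<inter> Ip, {kt t, n + t} \<inter> Jp)" for t
    define colr where "colr kk = ({i \<in> Ip. y i kk}, {kk})" for kk
    define rowr where "rowr ll = ({ll}, {j \<in> Jp. y ll j})" for ll
    define F' where "F' = F \<union> Gr ` B \<union> colr ` Kd \<union> rowr ` Ld"
    have Bp: "t < card Q \<and> m + t \<in> Ip \<and> n + t \<in> Jp" if H: "t \<in> B" for t using H B_def by auto
    have finF': "finite F'" unfolding F'_def using F(1) finB finK by simp
    have "card F' \<le> card F + card (Gr ` B) + card (colr ` Kd) + card (rowr ` Ld)"
      unfolding F'_def by (meson add_le_mono card_Un_le le_refl order_trans)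
    also have "\<dots> \<le> card F + card B + card Kd + card Ld"
      using card_image_le[OF finB(1), of Gr] card_image_le[OF finK(1), of colr] card_image_le[OF finK(2), of rowr]
      by linarith
    finally have cF': "card F' \<le> br_num W IW JW + card B + card Kd + card Ld" using F(2) by simp
    have KdJ: "kk \<in> Kd \<Longrightarrow> kk \<in> Jp" for kk unfolding Kd_def R_def J_def by auto
    have LdI: "ll \<in> Ld \<Longrightarrow> ll \<in> Ip" for ll unfolding Ld_def C_def I_def by auto
    have rects: "\<forall>(A, B)\<in>F'. is_rect Ym Ip Jp A B"
    proof (intro ballI)
      fix p assume p: "p \<in> F'"
      obtain A0 B0 where pAB: "p = (A0, B0)" by (cases p)
      have "is_rect Ym Ip Jp A0 B0"
      proof -
        have "p \<in> F \<or> p \<in> Gr ` B \<or> p \<in> colr ` Kd \<or> p \<in> rowr ` Ld" using p F'_def by auto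
        moreover have ?thesis if H: "p \<in> F"
        proof -
          have r: "is_rect W IW JW A0 B0" using F(3) H pAB by auto
          hence "A0 \<subseteq> Ip" "B0 \<subseteq> Jp" "A0 \<subseteq> {..<m}" "B0 \<subseteq> {..<n}" using IWsub unfolding is_rect_def by auto
          moreover have "\<forall>i\<in>A0. \<forall>j\<in>B0. X i j" using r qP_nz[OF Psub] unfolding is_rect_def W_def by auto
          ultimately show ?thesis unfolding is_rect_def by (auto simp: subset_iff y_old)
        qed
        moreover have ?thesis if H: "p \<in> Gr ` B"
        proof -
          obtain t where t: "t \<in> B" "p = Gr t" using H by auto
          thus ?thesis using pAB G_all[of t] Bp[OF t(1)] unfolding Gr_def is_rect_def by auto
        qed
        moreover have ?thesis if H: "p \<in> colr ` Kd"
        proof -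
          obtain kk where k: "kk \<in> Kd" "p = colr kk" using H by auto
          thus ?thesis using pAB KdJ[OF k(1)] unfolding colr_def is_rect_def by auto
        qed
        moreover have ?thesis if H: "p \<in> rowr ` Ld"
        proof -
          obtain ll where l: "ll \<in> Ld" "p = rowr ll" using H by auto
          thus ?thesis using pAB LdI[OF l(1)] unfolding rowr_def is_rect_def by auto
        qed
        ultimately show ?thesis by blast
      qed
      thus "case p of (A, B) \<Rightarrow> is_rect Ym Ip Jp A B" using pAB by simp
    qed
    have covers: "gsupp Ym Ip Jp \<subseteq> (\<Union>(A, B)\<in>F'. A \<times> B)"
    proof
      fix x assume x: "x \<in> gsupp Ym Ip Jp"
      obtain i j where xij: "x = (i, j)" by (cases x)
      have ij: "i \<in> Ip" "j \<in> Jp" "y i j" using x xij unfolding gsupp_def by auto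
      have bnd: "i < m + card Q" "j < n + card Q" using ij Ip Jp by auto
      have mem: "x \<in> (\<Union>(A, B)\<in>F'. A \<times> B)" if "p \<in> F'" "x \<in> fst p \<times> snd p" for p
        using that by (cases p) auto
      show "x \<in> (\<Union>(A, B)\<in>F'. A \<times> B)"
      proof (cases "i < m")
        case im: True
        show ?thesis
        proof (cases "j < n")
          case jn: True
          show ?thesis
          proof (cases "i \<in> Ld")
            case True
            thus ?thesis using mem[of "rowr i"] F'_def rowr_def ij xij by auto
          next
            case nL: False
            show ?thesis
            proof (cases "j \<in> Kd")
              case True
              thus ?thesis using mem[of "colr j"] F'_def colr_def ij xij by auto
            next
              case nK: False
              show ?thesis
              proof (cases "(i, j) \<in> P")
                case True
                then obtain t where t: "t \<in> B" "(i, j) = qs ! t" unfolding P_def by auto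
                hence "i = lt t" "j = kt t" using qs_eq[of t] by auto
                thus ?thesis using mem[of "Gr t"] F'_def Gr_def ij xij t(1) by auto
              next
                case False
                have "X i j" using ij y_old im jn by simp
                hence "x \<in> gsupp W IW JW" using False xij ij im jn nL nK
                  unfolding gsupp_def W_def qP_one IW_def JW_def I_def J_def by auto
                hence "x \<in> (\<Union>(A, B)\<in>F. A \<times> B)" using F(4) by blast
                thus ?thesis unfolding F'_def by blast
              qed
            qed
          qed
        next
          case jn: False
          define t where "t = j - n"
          have t: "t < card Q" "j = n + t" using jn bnd t_def by auto
          have it: "i = lt t" using ij(3) t y_ln[OF im t(1)] by simp
          show ?thesis
          proof (cases "t \<in> B")
            case True
            thus ?thesis using mem[of "Gr t"] F'_def Gr_def ij xij t it by auto
          next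
            case False
            hence "t \<in> C" using t ij it im unfolding B_def C_def I_def by auto
            hence "i \<in> Ld" using it Ld_def by auto
            thus ?thesis using mem[of "rowr i"] F'_def rowr_def ij xij by auto
          qed
        qed
      next
        case im: False
        define t where "t = i - m"
        have t: "t < card Q" "i = m + t" using im bnd t_def by auto
        show ?thesis
        proof (cases "j < n")
          case jn: True
          have jt: "j = kt t" using ij(3) t y_mk[OF t(1) jn] by simp
          show ?thesis
          proof (cases "t \<in> B")
            case True
            thus ?thesis using mem[of "Gr t"] F'_def Gr_def ij xij t jt by auto
          next
            case False
            hence "t \<in> R" using t ij jt jn unfolding B_def R_def J_def by auto
            hence "j \<in> Kd" using jt Kd_def by auto
            thus ?thesis using mem[of "colr j"] F'_def colr_def ij xij by auto
          qed
        next
          case jn: False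
          define s where "s = j - n"
          have s: "s < card Q" "j = n + s" using jn bnd s_def by auto
          have "s = t" using ij(3) t s y_mn[OF t(1) s(1)] by simp
          hence "t \<in> B" using ij t s B_def by auto
          thus ?thesis using mem[of "Gr t"] F'_def Gr_def ij xij t s \<open>s = t\<close> by auto
        qed
      qed
    qed
    have "br_num Ym Ip Jp \<le> card F'" by (rule br_le[OF finF' rects covers])
    thus ?thesis using cF' by simp
  qed
  have "isol_num Ym Ip Jp \<le> br_num Ym Ip Jp" by (rule isol_le_br[OF finIp finJp])
  thus ?thesis using lower upper eqW by linarith
qed

end

theorem theorem3:
  fixes X :: "nat \<Rightarrow> nat \<Rightarrow> bool" and m n :: nat and Q :: "(nat \<times> nat) set"
  assumes "Q \<noteq> {}" and "Q \<subset> bsupp X m n"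
    and "min_non_firm (qmat X Q) m n"
    and "\<forall>P. P \<subset> Q \<longrightarrow> firm (qmat X P) m n"
  shows "min_non_firm (qmat (stretch X m n Q) {}) (m + card Q) (n + card Q)"
proof -
  interpret stc X m n Q using assms(2) by unfold_locales auto
  have a: "isol_num (qmat X Q) {..<m} {..<n} < br_num (qmat X Q) {..<m} {..<n}"
    using assms(3) unfolding min_non_firm_def by blast
  have full: "isol_num Ym {..<m + card Q} {..<n + card Q} < br_num Ym {..<m + card Q} {..<n + card Q}"
    using i_full_upper br_full_lower a by linarith
  show ?thesis unfolding min_non_firm_def
  proof (intro conjI allI impI)
    show "isol_num Ym {..<m + card Q} {..<n + card Q} < br_num Ym {..<m + card Q} {..<n + card Q}"
      by (rule full)
  next
    fix I J assume "I \<subseteq> {..<m + card Q}" "J \<subseteq> {..<n + card Q}"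
      "I \<noteq> {..<m + card Q} \<or> J \<noteq> {..<n + card Q}"
    thus "isol_num Ym I J = br_num Ym I J" using proper_eq assms(3,4) by blast
  qed
qed

end
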